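(* For every positive integer $n$, the variety of complex $n$-dimensional nilpotent mono Leibniz algebras contains at least one rigid algebra.
   Context: An algebra is a Leibniz algebra if it satisfies $(xy)z=(xz)y+x(yz)$; it is a mono Leibniz algebra if every subalgebra generated by one element is a Leibniz algebra; it is nilpotent if for some $m$ every product of $m$ elements (any bracketing) vanishes. The variety is the Zariski-closed set of bilinear products on a fixed $n$-dimensional complex vector space $V$ (identified with structure constants in $\mathbb{C}^{n^3}$) satisfying these conditions, with $GL(V)$ acting by $(g*\mu)(x,y)=g\mu(g^{-1}x,g^{-1}y)$. An algebra is rigid if its $GL(V)$-orbit is Zariski-open in the variety. *)

theory Defs
  imports Complex_Main
begin

text \<open>The underlying space V = C^n is modelled as the function space 'n \<Rightarrow> complex
  for a finite index type 'n (n = CARD('n) \<ge> 1).  A bilinear product on V is given by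
  its structure constants S (i,j,k) = k-th coordinate of e_i e_j, i.e. a point of C^(n^3).\<close>

type_synonym 'n vec = "'n \<Rightarrow> complex"
type_synonym 'n sconst = "'n \<times> 'n \<times> 'n \<Rightarrow> complex"

definition prod_of :: "('n::finite) sconst \<Rightarrow> 'n vec \<Rightarrow> 'n vec \<Rightarrow> 'n vec" where
  "prod_of S x y = (\<lambda>k. \<Sum>i\<in>UNIV. \<Sum>j\<in>UNIV. x i * y j * S (i, j, k))"

definition basis_vec :: "('n::finite) \<Rightarrow> 'n vec" where
  "basis_vec i = (\<lambda>j. if j = i then 1 else 0)"

definition lin_apply :: "('n::finite \<Rightarrow> 'n \<Rightarrow> complex) \<Rightarrow> 'n vec \<Rightarrow> 'n vec" where
  "lin_apply g x = (\<lambda>i. \<Sum>j\<in>UNIV. g i j * x j)"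

text \<open>GL(V): pairs (g, h) of mutually inverse linear maps.\<close>
definition inv_pair :: "('n::finite \<Rightarrow> 'n \<Rightarrow> complex) \<Rightarrow> ('n \<Rightarrow> 'n \<Rightarrow> complex) \<Rightarrow> bool" where
  "inv_pair g h \<longleftrightarrow> (\<forall>x. lin_apply g (lin_apply h x) = x) \<and> (\<forall>x. lin_apply h (lin_apply g x) = x)"

text \<open>(g * mu)(x,y) = g mu(g^-1 x, g^-1 y), where h = g^-1.\<close>
definition gl_act :: "('n::finite \<Rightarrow> 'n \<Rightarrow> complex) \<Rightarrow> ('n \<Rightarrow> 'n \<Rightarrow> complex) \<Rightarrow> 'n sconst \<Rightarrow> 'n sconst" where
  "gl_act g h S = (\<lambda>(i, j, k). lin_apply g (prod_of S (lin_apply h (basis_vec i)) (lin_apply h (basis_vec j))) k)"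

definition orbit :: "('n::finite) sconst \<Rightarrow> 'n sconst set" where
  "orbit S = {gl_act g h S | g h. inv_pair g h}"

definition leibniz_on :: "('n::finite) sconst \<Rightarrow> 'n vec set \<Rightarrow> bool" where
  "leibniz_on S W \<longleftrightarrow> (\<forall>x\<in>W. \<forall>y\<in>W. \<forall>z\<in>W.
     (\<forall>k. prod_of S (prod_of S x y) z k = prod_of S (prod_of S x z) y k + prod_of S x (prod_of S y z) k))"

definition is_leibniz :: "('n::finite) sconst \<Rightarrow> bool" where
  "is_leibniz S \<longleftrightarrow> leibniz_on S UNIV"

definition is_subalgebra :: "('n::finite) sconst \<Rightarrow> 'n vec set \<Rightarrow> bool" where
  "is_subalgebra S W \<longleftrightarrow> (\<lambda>i. 0) \<in> W \<and> (\<forall>x\<in>W. \<forall>y\<in>W. (\<lambda>i. x i + y i) \<in> W)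
     \<and> (\<forall>c::complex. \<forall>x\<in>W. (\<lambda>i. c * x i) \<in> W) \<and> (\<forall>x\<in>W. \<forall>y\<in>W. prod_of S x y \<in> W)"

definition gen_subalgebra :: "('n::finite) sconst \<Rightarrow> 'n vec \<Rightarrow> 'n vec set" where
  "gen_subalgebra S a = \<Inter>{W. is_subalgebra S W \<and> a \<in> W}"

definition is_mono_leibniz :: "('n::finite) sconst \<Rightarrow> bool" where
  "is_mono_leibniz S \<longleftrightarrow> (\<forall>a. leibniz_on S (gen_subalgebra S a))"

datatype 'a btree = Leaf 'a | Node "'a btree" "'a btree"

fun num_leaves :: "'a btree \<Rightarrow> nat" where
  "num_leaves (Leaf _) = 1"
| "num_leaves (Node l r) = num_leaves l + num_leaves r"

fun eval_tree :: "('n::finite) sconst \<Rightarrow> 'n vec btree \<Rightarrow> 'n vec" where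
  "eval_tree S (Leaf x) = x"
| "eval_tree S (Node l r) = prod_of S (eval_tree S l) (eval_tree S r)"

definition is_nilpotent :: "('n::finite) sconst \<Rightarrow> bool" where
  "is_nilpotent S \<longleftrightarrow> (\<exists>m\<ge>1. \<forall>t. num_leaves t = m \<longrightarrow> eval_tree S t = (\<lambda>k. 0))"

definition nil_mono_leibniz_variety :: "('n::finite) sconst set" where
  "nil_mono_leibniz_variety = {S. is_nilpotent S \<and> is_mono_leibniz S}"

inductive_set poly_fun :: "(('i \<Rightarrow> complex) \<Rightarrow> complex) set" where
  pconst: "(\<lambda>x. c) \<in> poly_fun"
| pvar: "(\<lambda>x. x i) \<in> poly_fun"
| padd: "p \<in> poly_fun \<Longrightarrow> q \<in> poly_fun \<Longrightarrow> (\<lambda>x. p x + q x) \<in> poly_fun"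
| pmult: "p \<in> poly_fun \<Longrightarrow> q \<in> poly_fun \<Longrightarrow> (\<lambda>x. p x * q x) \<in> poly_fun"

definition zariski_closed :: "('i \<Rightarrow> complex) set \<Rightarrow> bool" where
  "zariski_closed C \<longleftrightarrow> (\<exists>P \<subseteq> poly_fun. C = {x. \<forall>p\<in>P. p x = 0})"

definition zariski_open :: "('i \<Rightarrow> complex) set \<Rightarrow> bool" where
  "zariski_open U \<longleftrightarrow> zariski_closed (- U)"

definition rigid_in :: "('n::finite) sconst set \<Rightarrow> 'n sconst \<Rightarrow> bool" where
  "rigid_in X S \<longleftrightarrow> (\<exists>U. zariski_open U \<and> orbit S = X \<inter> U)"

end

theory Submission
  imports Defs "HOL-Analysis.Determinants"
begin

definition ix :: "'n::finite \<Rightarrow> nat" where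
  "ix = (SOME f. bij_betw f (UNIV::'n set) {..<CARD('n)})"

lemma ix_bij: "bij_betw (ix::'n::finite\<Rightarrow>nat) UNIV {..<CARD('n)}"
proof -
  obtain f where "bij_betw f (UNIV::'n set) {0..<card (UNIV::'n set)}"
    using ex_bij_betw_finite_nat[of "UNIV::'n set"] by auto
  then have "\<exists>f. bij_betw f (UNIV::'n set) {..<CARD('n)}" by (metis atLeast0LessThan)
  then show ?thesis unfolding ix_def by (rule someI_ex)
qed

definition nx :: "nat \<Rightarrow> 'n::finite" where "nx = inv_into UNIV ix"

lemma ix_lt[simp]: "ix (i::'n::finite) < CARD('n)"
proof -
  have "bij_betw (ix::'n\<Rightarrow>nat) UNIV {..<CARD('n)}" by (rule ix_bij)
  then show ?thesis by (auto simp: bij_betw_def)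
qed

lemma nx_ix[simp]: "nx (ix (i::'n::finite)) = i"
proof -
  have "bij_betw (ix::'n\<Rightarrow>nat) UNIV {..<CARD('n)}" by (rule ix_bij)
  then show ?thesis unfolding nx_def by (simp add: bij_betw_def)
qed

lemma ix_nx[simp]: "m < CARD('n::finite) \<Longrightarrow> ix (nx m :: 'n) = m"
proof -
  assume m: "m < CARD('n)"
  have "bij_betw (ix::'n\<Rightarrow>nat) UNIV {..<CARD('n)}" by (rule ix_bij)
  then show ?thesis using m unfolding nx_def by (simp add: bij_betw_def f_inv_into_f)
qed

lemma ix_inj[simp]: "(ix (i::'n::finite) = ix j) = (i = j)"
  by (metis nx_ix)

lemma sum_reindex: "(\<Sum>i\<in>(UNIV::'n::finite set). f i) = (\<Sum>m<CARD('n). f (nx m))"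
proof -
  have "bij_betw (ix::'n\<Rightarrow>nat) UNIV {..<CARD('n)}" by (rule ix_bij)
  from sum.reindex_bij_betw[OF this, of "\<lambda>m. f (nx m)"] show ?thesis by simp
qed


lemma prod_lin1:
  assumes "finite A"
  shows "prod_of S (\<lambda>k. \<Sum>l\<in>A. c l * v l k) y = (\<lambda>k. \<Sum>l\<in>A. c l * prod_of S (v l) y k)"
proof
  fix k
  have "prod_of S (\<lambda>k. \<Sum>l\<in>A. c l * v l k) y k = (\<Sum>i\<in>UNIV. \<Sum>j\<in>UNIV. \<Sum>l\<in>A. c l * (v l i * y j * S (i, j, k)))"
    unfolding prod_of_def by (simp add: sum_distrib_right sum_distrib_left mult_ac)
  also have "\<dots> = (\<Sum>i\<in>UNIV. \<Sum>l\<in>A. \<Sum>j\<in>UNIV. c l * (v l i * y j * S (i, j, k)))"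
    by (rule sum.cong[OF refl], rule sum.swap)
  also have "\<dots> = (\<Sum>l\<in>A. \<Sum>i\<in>UNIV. \<Sum>j\<in>UNIV. c l * (v l i * y j * S (i, j, k)))"
    by (rule sum.swap)
  also have "\<dots> = (\<Sum>l\<in>A. c l * prod_of S (v l) y k)"
    unfolding prod_of_def by (simp add: sum_distrib_left)
  finally show "prod_of S (\<lambda>k. \<Sum>l\<in>A. c l * v l k) y k = (\<Sum>l\<in>A. c l * prod_of S (v l) y k)" .
qed

lemma prod_lin2:
  assumes "finite A"
  shows "prod_of S x (\<lambda>k. \<Sum>l\<in>A. c l * v l k) = (\<lambda>k. \<Sum>l\<in>A. c l * prod_of S x (v l) k)"
proof
  fix k
  have "prod_of S x (\<lambda>k. \<Sum>l\<in>A. c l * v l k) k = (\<Sum>i\<in>UNIV. \<Sum>j\<in>UNIV. \<Sum>l\<in>A. c l * (x i * v l j * S (i, j, k)))"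
    unfolding prod_of_def by (simp add: sum_distrib_right sum_distrib_left mult_ac)
  also have "\<dots> = (\<Sum>i\<in>UNIV. \<Sum>l\<in>A. \<Sum>j\<in>UNIV. c l * (x i * v l j * S (i, j, k)))"
    by (rule sum.cong[OF refl], rule sum.swap)
  also have "\<dots> = (\<Sum>l\<in>A. \<Sum>i\<in>UNIV. \<Sum>j\<in>UNIV. c l * (x i * v l j * S (i, j, k)))"
    by (rule sum.swap)
  also have "\<dots> = (\<Sum>l\<in>A. c l * prod_of S x (v l) k)"
    unfolding prod_of_def by (simp add: sum_distrib_left)
  finally show "prod_of S x (\<lambda>k. \<Sum>l\<in>A. c l * v l k) k = (\<Sum>l\<in>A. c l * prod_of S x (v l) k)" .
qed

lemma lin_lin:
  assumes "finite A"
  shows "lin_apply g (\<lambda>k. \<Sum>l\<in>A. c l * v l k) = (\<lambda>k. \<Sum>l\<in>A. c l * lin_apply g (v l) k)"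
proof
  fix k
  have "lin_apply g (\<lambda>k. \<Sum>l\<in>A. c l * v l k) k = (\<Sum>j\<in>UNIV. \<Sum>l\<in>A. c l * (g k j * v l j))"
    unfolding lin_apply_def by (simp add: sum_distrib_left mult_ac)
  also have "\<dots> = (\<Sum>l\<in>A. \<Sum>j\<in>UNIV. c l * (g k j * v l j))"
    by (rule sum.swap)
  also have "\<dots> = (\<Sum>l\<in>A. c l * lin_apply g (v l) k)"
    unfolding lin_apply_def by (simp add: sum_distrib_left)
  finally show "lin_apply g (\<lambda>k. \<Sum>l\<in>A. c l * v l k) k = (\<Sum>l\<in>A. c l * lin_apply g (v l) k)" .
qed

lemma prod_add1: "prod_of S (\<lambda>k. x k + x' k) y = (\<lambda>k. prod_of S x y k + prod_of S x' y k)"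
  unfolding prod_of_def by (simp add: distrib_right sum.distrib)

lemma prod_add2: "prod_of S x (\<lambda>k. y k + y' k) = (\<lambda>k. prod_of S x y k + prod_of S x y' k)"
  unfolding prod_of_def by (simp add: distrib_left distrib_right sum.distrib)

lemma prod_scale1: "prod_of S (\<lambda>k. c * x k) y = (\<lambda>k. c * prod_of S x y k)"
  unfolding prod_of_def by (simp add: sum_distrib_left mult_ac)

lemma prod_scale2: "prod_of S x (\<lambda>k. c * y k) = (\<lambda>k. c * prod_of S x y k)"
  unfolding prod_of_def by (simp add: sum_distrib_left mult_ac)

lemma prod_zero1[simp]: "prod_of S (\<lambda>k. 0) y = (\<lambda>k. 0)"
  unfolding prod_of_def by simp

lemma prod_zero2[simp]: "prod_of S x (\<lambda>k. 0) = (\<lambda>k. 0)"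
  unfolding prod_of_def by simp

lemma lin_add: "lin_apply g (\<lambda>k. x k + y k) = (\<lambda>k. lin_apply g x k + lin_apply g y k)"
  unfolding lin_apply_def by (simp add: distrib_left sum.distrib)

lemma lin_scale: "lin_apply g (\<lambda>k. c * x k) = (\<lambda>k. c * lin_apply g x k)"
  unfolding lin_apply_def by (simp add: sum_distrib_left mult_ac)

lemma lin_zero[simp]: "lin_apply g (\<lambda>k. 0) = (\<lambda>k. 0)"
  unfolding lin_apply_def by simp

lemma lin_basis: "lin_apply h (basis_vec i) = (\<lambda>p. h p i)"
  unfolding lin_apply_def basis_vec_def by (simp add: if_distrib cong: if_cong)

lemma lin_expand: "lin_apply h x = (\<lambda>p. \<Sum>i\<in>UNIV. x i * lin_apply h (basis_vec i) p)"
  unfolding lin_basis unfolding lin_apply_def by (simp add: mult_ac)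

lemma gl_prod:
  "prod_of (gl_act g h S) x y = lin_apply g (prod_of S (lin_apply h x) (lin_apply h y))"
proof -
  define H where "H i = lin_apply h (basis_vec i)" for i
  have "prod_of S (lin_apply h x) (lin_apply h y) =
        (\<lambda>k. \<Sum>i\<in>UNIV. x i * (\<Sum>j\<in>UNIV. y j * prod_of S (H i) (H j) k))"
    apply (subst lin_expand[of h x], subst lin_expand[of h y])
    apply (subst prod_lin1, simp)
    apply (subst prod_lin2, simp)
    apply (simp add: H_def)
    done
  then have "lin_apply g (prod_of S (lin_apply h x) (lin_apply h y)) =
        (\<lambda>k. \<Sum>i\<in>UNIV. x i * (\<Sum>j\<in>UNIV. y j * lin_apply g (prod_of S (H i) (H j)) k))"
    apply simp
    apply (subst lin_lin, simp)
    apply (subst lin_lin, simp)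
    apply simp
    done
  moreover have "prod_of (gl_act g h S) x y = 
        (\<lambda>k. \<Sum>i\<in>UNIV. x i * (\<Sum>j\<in>UNIV. y j * lin_apply g (prod_of S (H i) (H j)) k))"
  proof
    fix k
    have "prod_of (gl_act g h S) x y k = (\<Sum>i\<in>UNIV. \<Sum>j\<in>UNIV. x i * y j * gl_act g h S (i, j, k))"
      unfolding prod_of_def ..
    then show "prod_of (gl_act g h S) x y k = (\<Sum>i\<in>UNIV. x i * (\<Sum>j\<in>UNIV. y j * lin_apply g (prod_of S (H i) (H j)) k))"
      by (simp add: gl_act_def H_def sum_distrib_left mult_ac)
  qed
  ultimately show ?thesis by simp
qed


definition S0 :: "('n::finite) sconst" where
  "S0 = (\<lambda>(i, j, k). if ix j = 0 \<and> ix k = Suc (ix i) then 1 else 0)"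

definition shift :: "('n::finite \<Rightarrow> complex) \<Rightarrow> ('n \<Rightarrow> complex)" where
  "shift x = (\<lambda>k. if ix k = 0 then 0 else x (nx (ix k - 1)))"

lemma card_pos: "0 < CARD('n::finite)"
  by simp

lemma ix_zero_iff: "(ix (j::'n::finite) = 0) = (j = nx 0)"
proof -
  have "ix (nx 0 :: 'n) = 0" by (rule ix_nx) simp
  then show ?thesis by (metis nx_ix)
qed

lemma ix_suc_iff: "(ix (k::'n::finite) = Suc (ix (i::'n))) = (ix k \<noteq> 0 \<and> i = nx (ix k - 1))"
proof
  assume "ix k = Suc (ix i)" then show "ix k \<noteq> 0 \<and> i = nx (ix k - 1)" by simp
next
  assume "ix k \<noteq> 0 \<and> i = nx (ix k - 1)"
  moreover have "ix k - 1 < CARD('n)" using ix_lt[of k] by linarith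
  then have "ix (nx (ix k - 1) :: 'n) = ix k - 1" by (rule ix_nx)
  ultimately show "ix k = Suc (ix i)" by simp
qed

lemma S0_alt: "S0 (i::'n::finite, j, k) = (if j = nx 0 then (if ix k \<noteq> 0 \<and> i = nx (ix k - 1) then 1 else 0) else 0)"
  unfolding S0_def by (simp add: ix_zero_iff ix_suc_iff)

lemma S0_prod: "prod_of S0 x y = (\<lambda>k. y (nx 0) * shift x k)"
proof
  fix k :: 'a
  show "prod_of S0 x y k = y (nx 0) * shift x k"
    unfolding prod_of_def S0_alt shift_def
    by (simp add: if_distrib[of "\<lambda>z. _ * z"] sum.If_cases cong: if_cong)
qed


lemma shift_scale: "shift (\<lambda>k. c * x k) = (\<lambda>k. c * shift x k)"
  unfolding shift_def by auto

lemma shift_at0: "shift x (nx 0) = 0"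
proof -
  have "ix (nx 0 :: 'a) = 0" by (rule ix_nx) simp
  then show ?thesis unfolding shift_def by simp
qed

lemma S0_leibniz: "is_leibniz (S0::('n::finite) sconst)"
  unfolding is_leibniz_def leibniz_on_def
  by (simp add: S0_prod shift_scale shift_at0)

lemma num_leaves_pos: "num_leaves t \<ge> 1"
  by (induction t) auto

lemma S0_tree: "ix k + 1 < num_leaves t \<Longrightarrow> eval_tree (S0::('n::finite) sconst) t k = 0"
proof (induction t arbitrary: k)
  case (Leaf x)
  then show ?case by simp
next
  case (Node l r)
  show ?case
  proof (cases "num_leaves r = 1")
    case False
    then have "num_leaves r \<ge> 2" using num_leaves_pos[of r] by linarith
    moreover have "ix (nx 0 :: 'n) = 0" by (rule ix_nx) simp
    ultimately have "eval_tree S0 r (nx 0 :: 'n) = 0" using Node.IH(2)[of "nx 0"] by simp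
    then show ?thesis by (simp add: S0_prod)
  next
    case True
    show ?thesis
    proof (cases "ix k = 0")
      case True
      then show ?thesis by (simp add: S0_prod shift_def)
    next
      case False
      have lt: "ix k - 1 < CARD('n)" using ix_lt[of k] by linarith
      then have e: "ix (nx (ix k - 1) :: 'n) = ix k - 1" by (rule ix_nx)
      have "eval_tree S0 l (nx (ix k - 1)) = 0"
        using Node.IH(1)[of "nx (ix k - 1)"] Node.prems True False e by simp
      then show ?thesis using False by (simp add: S0_prod shift_def)
    qed
  qed
qed

lemma S0_nilp: "is_nilpotent (S0::('n::finite) sconst)"
  unfolding is_nilpotent_def
proof (intro exI[of _ "CARD('n) + 1"] conjI allI impI)
  fix t :: "('n \<Rightarrow> complex) btree"
  assume "num_leaves t = CARD('n) + 1"
  then show "eval_tree S0 t = (\<lambda>k. 0)"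
    using S0_tree[of _ t] ix_lt by fastforce
qed simp

primrec rpow :: "('n::finite) sconst \<Rightarrow> ('n \<Rightarrow> complex) \<Rightarrow> nat \<Rightarrow> ('n \<Rightarrow> complex)" where
  "rpow S a 0 = a"
| "rpow S a (Suc m) = prod_of S (rpow S a m) a"

lemma S0_rpow: "m < CARD('n) \<Longrightarrow> rpow S0 (basis_vec (nx 0)) m = basis_vec (nx m :: 'n::finite)"
proof (induction m)
  case 0
  then show ?case by simp
next
  case (Suc m)
  then have IH: "rpow S0 (basis_vec (nx 0)) m = basis_vec (nx m :: 'n)" by simp
  have e1: "ix (nx m :: 'n) = m" using Suc.prems by (intro ix_nx) simp
  have e2: "ix (nx (Suc m) :: 'n) = Suc m" using Suc.prems by (intro ix_nx) simp
  show ?case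
  proof
    fix k :: 'n
    have "rpow S0 (basis_vec (nx 0)) (Suc m) k = shift (basis_vec (nx m)) k"
    proof -
      have "basis_vec (nx 0) (nx 0 :: 'n) = 1" by (simp add: basis_vec_def)
      then show ?thesis by (simp add: IH S0_prod)
    qed
    also have "\<dots> = basis_vec (nx (Suc m)) k"
    proof (cases "ix k = 0")
      case True
      then show ?thesis using e2 unfolding shift_def basis_vec_def by auto
    next
      case False
      have lt: "ix k - 1 < CARD('n)" using ix_lt[of k] by linarith
      have "(nx (ix k - 1) = (nx m::'n)) = (ix k - 1 = m)"
        using lt Suc.prems by (metis Suc_lessD ix_nx)
      moreover have "(k = nx (Suc m)) = (ix k = Suc m)" using e2 by (metis nx_ix)
      ultimately show ?thesis using False unfolding shift_def basis_vec_def by auto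
    qed
    finally show "rpow S0 (basis_vec (nx 0)) (Suc m) k = basis_vec (nx (Suc m)) k" .
  qed
qed


lemma inv_pair_hg: "inv_pair g h \<Longrightarrow> lin_apply h (lin_apply g x) = x"
  unfolding inv_pair_def by blast

lemma inv_pair_gh: "inv_pair g h \<Longrightarrow> lin_apply g (lin_apply h x) = x"
  unfolding inv_pair_def by blast

lemma gl_prod_g: "inv_pair g h \<Longrightarrow>
  prod_of (gl_act g h S) (lin_apply g x) (lin_apply g y) = lin_apply g (prod_of S x y)"
  by (simp add: gl_prod inv_pair_hg)

lemma gl_tree: "inv_pair g h \<Longrightarrow>
  eval_tree (gl_act g h S) t = lin_apply g (eval_tree S (map_btree (lin_apply h) t))"
proof (induction t)
  case (Leaf x)
  then show ?case by (simp add: inv_pair_gh)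
next
  case (Node l r)
  then show ?case by (simp add: gl_prod inv_pair_hg)
qed

lemma num_leaves_map: "num_leaves (map_btree f t) = num_leaves t"
  by (induction t) auto

lemma gl_nilp: "inv_pair g h \<Longrightarrow> is_nilpotent S \<Longrightarrow> is_nilpotent (gl_act g h S)"
  unfolding is_nilpotent_def
proof -
  assume ip: "inv_pair g h" and "\<exists>m\<ge>1. \<forall>t. num_leaves t = m \<longrightarrow> eval_tree S t = (\<lambda>k. 0)"
  then obtain m where m: "m \<ge> 1" "\<forall>t. num_leaves t = m \<longrightarrow> eval_tree S t = (\<lambda>k. 0)" by blast
  show "\<exists>m\<ge>1. \<forall>t. num_leaves t = m \<longrightarrow> eval_tree (gl_act g h S) t = (\<lambda>k. 0)"
  proof (intro exI[of _ m] conjI allI impI)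
    fix t :: "('a \<Rightarrow> complex) btree"
    assume "num_leaves t = m"
    then have "eval_tree S (map_btree (lin_apply h) t) = (\<lambda>k. 0)" using m(2) num_leaves_map by metis
    then show "eval_tree (gl_act g h S) t = (\<lambda>k. 0)" by (simp add: gl_tree[OF ip])
  qed (rule m(1))
qed

lemma lin_diff_add: "lin_apply g (\<lambda>k. x k + y k) k = lin_apply g x k + lin_apply g y k"
  by (simp add: lin_add)

lemma gl_leib: "inv_pair g h \<Longrightarrow> is_leibniz S \<Longrightarrow> is_leibniz (gl_act g h S)"
  unfolding is_leibniz_def leibniz_on_def
proof (intro ballI allI)
  fix x y z :: "'a \<Rightarrow> complex" and k
  assume ip: "inv_pair g h" and L: "\<forall>x\<in>UNIV. \<forall>y\<in>UNIV. \<forall>z\<in>UNIV. \<forall>k.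
        prod_of S (prod_of S x y) z k = prod_of S (prod_of S x z) y k + prod_of S x (prod_of S y z) k"
  let ?x = "lin_apply h x" and ?y = "lin_apply h y" and ?z = "lin_apply h z"
  have e: "prod_of S (prod_of S ?x ?y) ?z = (\<lambda>k. prod_of S (prod_of S ?x ?z) ?y k + prod_of S ?x (prod_of S ?y ?z) k)"
    using L by blast
  show "prod_of (gl_act g h S) (prod_of (gl_act g h S) x y) z k =
         prod_of (gl_act g h S) (prod_of (gl_act g h S) x z) y k +
         prod_of (gl_act g h S) x (prod_of (gl_act g h S) y z) k"
    by (simp add: gl_prod inv_pair_hg[OF ip] e lin_add)
qed

lemma gl_rpow: "inv_pair g h \<Longrightarrow> rpow (gl_act g h S) (lin_apply g a) m = lin_apply g (rpow S a m)"
  by (induction m) (simp_all add: gl_prod inv_pair_hg)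


definition matA :: "('n::finite) sconst \<Rightarrow> ('n \<Rightarrow> complex) \<Rightarrow> complex^'n^'n" where
  "matA S a = (\<chi> i j. rpow S a (ix i) j)"

lemma poly_sum: "finite A \<Longrightarrow> (\<And>x. x \<in> A \<Longrightarrow> f x \<in> poly_fun) \<Longrightarrow> (\<lambda>S. \<Sum>x\<in>A. f x S) \<in> poly_fun"
proof (induction A rule: finite_induct)
  case empty
  then show ?case using poly_fun.pconst[of 0] by simp
next
  case (insert x F)
  then show ?case using poly_fun.padd[of "f x" "\<lambda>S. \<Sum>x\<in>F. f x S"] by simp
qed

lemma poly_prod: "finite A \<Longrightarrow> (\<And>x. x \<in> A \<Longrightarrow> f x \<in> poly_fun) \<Longrightarrow> (\<lambda>S. \<Prod>x\<in>A. f x S) \<in> poly_fun"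
proof (induction A rule: finite_induct)
  case empty
  then show ?case using poly_fun.pconst[of 1] by simp
next
  case (insert x F)
  then show ?case using poly_fun.pmult[of "f x" "\<lambda>S. \<Prod>x\<in>F. f x S"] by simp
qed

lemma poly_rpow: "(\<lambda>S. rpow S a m k) \<in> poly_fun"
proof (induction m arbitrary: k)
  case 0
  then show ?case using poly_fun.pconst by simp
next
  case (Suc m)
  have "(\<lambda>S. \<Sum>i\<in>UNIV. \<Sum>j\<in>UNIV. rpow S a m i * a j * S (i, j, k)) \<in> poly_fun"
    by (intro poly_sum poly_fun.pmult poly_fun.pconst poly_fun.pvar Suc.IH) auto
  then show ?case by (simp add: prod_of_def)
qed

lemma poly_det: "(\<lambda>S. det (matA S a)) \<in> poly_fun"
proof -
  have "(\<lambda>S. \<Sum>p\<in>{p. p permutes (UNIV::'a set)}. of_int (sign p) * (\<Prod>i\<in>UNIV. rpow S a (ix i) (p i))) \<in> poly_fun"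
    by (intro poly_sum poly_prod poly_fun.pmult poly_fun.pconst poly_rpow) (auto simp: finite_permutations)
  then show ?thesis by (simp add: det_def matA_def)
qed

definition Uopen :: "('n::finite) sconst set" where
  "Uopen = {S. \<exists>a. det (matA S a) \<noteq> 0}"

lemma Uopen_open: "zariski_open (Uopen :: ('n::finite) sconst set)"
  unfolding zariski_open_def zariski_closed_def
proof (intro exI[of _ "range (\<lambda>a S. det (matA S a))"] conjI)
  show "range (\<lambda>a S. det (matA S a)) \<subseteq> poly_fun" using poly_det by blast
  show "- Uopen = {x. \<forall>p\<in>range (\<lambda>a S. det (matA S a)). p x = 0}"
    unfolding Uopen_def by auto
qed


lemma inv_pair_entry: "inv_pair g h \<Longrightarrow> (\<Sum>j\<in>UNIV. h k j * g j i) = (if i = k then 1 else 0)"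
proof -
  assume ip: "inv_pair g h"
  have "lin_apply h (lin_apply g (basis_vec i)) k = basis_vec i k" using inv_pair_hg[OF ip] by simp
  then show ?thesis unfolding lin_basis by (auto simp: lin_apply_def basis_vec_def)
qed

lemma leibniz_mono: "is_leibniz S \<Longrightarrow> is_mono_leibniz S"
  unfolding is_leibniz_def is_mono_leibniz_def leibniz_on_def by blast

lemma orbit_sub: "T \<in> orbit (S0::('n::finite) sconst) \<Longrightarrow> T \<in> nil_mono_leibniz_variety \<and> T \<in> Uopen"
proof -
  assume "T \<in> orbit S0"
  then obtain g h where ip: "inv_pair g h" and T: "T = gl_act g h S0" unfolding orbit_def by blast
  have "T \<in> nil_mono_leibniz_variety"
    unfolding nil_mono_leibniz_variety_def T
    using gl_nilp[OF ip S0_nilp] leibniz_mono[OF gl_leib[OF ip S0_leibniz]] by simp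
  moreover have "T \<in> Uopen"
  proof -
    let ?a = "lin_apply g (basis_vec (nx 0))"
    have A: "matA T ?a = (\<chi> i j. g j i)"
    proof -
      have "\<And>i. rpow T ?a (ix i) = lin_apply g (basis_vec i)"
        unfolding T by (simp add: gl_rpow[OF ip] S0_rpow)
      then show ?thesis unfolding matA_def by (simp add: lin_basis)
    qed
    have "matA T ?a ** (\<chi> i j. h j i) = mat 1"
      unfolding A by (simp add: matrix_matrix_mult_def mat_def vec_eq_iff mult.commute[of "g _ _"] inv_pair_entry[OF ip])
    then have "invertible (matA T ?a)" using invertible_right_inverse by blast
    then have "det (matA T ?a) \<noteq> 0" using invertible_det_nz by blast
    then show ?thesis unfolding Uopen_def by blast
  qed
  ultimately show ?thesis by blast
qed


lemma rpow_in_gen: "rpow S a m \<in> gen_subalgebra S a"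
  unfolding gen_subalgebra_def
proof (intro InterI, clarify)
  fix W assume sub: "is_subalgebra S W" and aW: "a \<in> W"
  show "rpow S a m \<in> W"
    by (induction m) (use sub aW in \<open>auto simp: is_subalgebra_def\<close>)
qed

lemma zero_prods:
  assumes L: "leibniz_on S (gen_subalgebra S a)"
  shows "prod_of S (rpow S a p) (rpow S a (Suc q)) = (\<lambda>k. 0)"
proof -
  have Lx: "\<And>x y z k. x \<in> gen_subalgebra S a \<Longrightarrow> y \<in> gen_subalgebra S a \<Longrightarrow> z \<in> gen_subalgebra S a \<Longrightarrow>
     prod_of S (prod_of S x y) z k = prod_of S (prod_of S x z) y k + prod_of S x (prod_of S y z) k"
    using L unfolding leibniz_on_def by blast
  show ?thesis
proof (induction q arbitrary: p)
  case 0
  have "\<forall>k. prod_of S (prod_of S (rpow S a p) a) a k = prod_of S (prod_of S (rpow S a p) a) a k + prod_of S (rpow S a p) (prod_of S a a) k"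
    using Lx[OF rpow_in_gen[of S a p] rpow_in_gen[of S a 0] rpow_in_gen[of S a 0]] by simp
  then show ?case by auto
next
  case (Suc q)
  let ?x = "rpow S a p" and ?y = "rpow S a (Suc q)"
  have "\<forall>k. prod_of S (prod_of S ?x ?y) a k = prod_of S (prod_of S ?x a) ?y k + prod_of S ?x (prod_of S ?y a) k"
    using Lx[OF rpow_in_gen[of S a p] rpow_in_gen[of S a "Suc q"] rpow_in_gen[of S a 0]] by simp
  moreover have "prod_of S ?x ?y = (\<lambda>k. 0)" by (rule Suc.IH)
  moreover have "prod_of S (prod_of S ?x a) ?y = (\<lambda>k. 0)" using Suc.IH[of "Suc p"] by simp
  ultimately show ?case by auto
qed
qed

primrec rit :: "('n::finite) sconst \<Rightarrow> ('n \<Rightarrow> complex) \<Rightarrow> ('n \<Rightarrow> complex) \<Rightarrow> nat \<Rightarrow> ('n \<Rightarrow> complex)" where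
  "rit S a x 0 = x"
| "rit S a x (Suc K) = prod_of S (rit S a x K) a"

primrec lcomb :: "'v \<Rightarrow> 'v \<Rightarrow> nat \<Rightarrow> 'v btree" where
  "lcomb a x 0 = Leaf x"
| "lcomb a x (Suc K) = Node (lcomb a x K) (Leaf a)"

lemma lcomb_leaves: "num_leaves (lcomb a x K) = Suc K"
  by (induction K) auto

lemma lcomb_eval: "eval_tree S (lcomb a x K) = rit S a x K"
  by (induction K) auto

lemma nilp_rit: "is_nilpotent S \<Longrightarrow> \<exists>K. \<forall>x. rit S a x K = (\<lambda>k. 0)"
proof -
  assume "is_nilpotent S"
  then obtain m where m: "m \<ge> 1" "\<forall>t. num_leaves t = m \<longrightarrow> eval_tree S t = (\<lambda>k. 0)"
    unfolding is_nilpotent_def by blast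
  have "\<forall>x. rit S a x (m - 1) = (\<lambda>k. 0)"
  proof
    fix x
    have "num_leaves (lcomb a x (m - 1)) = m" using m(1) by (simp add: lcomb_leaves)
    then show "rit S a x (m - 1) = (\<lambda>k. 0)" using m(2) by (simp add: lcomb_eval[symmetric])
  qed
  then show ?thesis by blast
qed

lemma prod_basis: "prod_of S (basis_vec i) (basis_vec j) k = S (i, j, k)"
proof -
  have "prod_of S (basis_vec i) (basis_vec j) k = (\<Sum>a\<in>UNIV. if a = i then (\<Sum>b\<in>UNIV. if b = j then S (a, b, k) else 0) else 0)"
    unfolding prod_of_def basis_vec_def by (intro sum.cong refl) (auto simp: if_distrib[of "\<lambda>x. x * _"] cong: if_cong)
  also have "\<dots> = S (i, j, k)" by simp
  finally show ?thesis .
qed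

lemma cond_iff:
  "(i \<noteq> (nx (CARD('n) - 1) :: 'n::finite) \<and> (k::'n) = nx (Suc (ix i))) = (ix k \<noteq> 0 \<and> i = nx (ix k - 1))"
proof
  assume A: "i \<noteq> nx (CARD('n) - 1) \<and> k = nx (Suc (ix i))"
  then have "ix i \<noteq> CARD('n) - 1" by (metis nx_ix)
  then have lt: "Suc (ix i) < CARD('n)" using ix_lt[of i] by linarith
  then have "ix k = Suc (ix i)" using A ix_nx[OF lt] by simp
  then show "ix k \<noteq> 0 \<and> i = nx (ix k - 1)" by simp
next
  assume A: "ix k \<noteq> 0 \<and> i = nx (ix k - 1)"
  have lt: "ix k - 1 < CARD('n)" using ix_lt[of k] by linarith
  then have ii: "ix i = ix k - 1" using A ix_nx[OF lt] by simp
  then have "Suc (ix i) = ix k" using A by linarith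
  then have "k = nx (Suc (ix i))" by simp
  moreover have "i \<noteq> nx (CARD('n) - 1)"
  proof
    assume "i = nx (CARD('n) - 1)"
    then have "ix i = CARD('n) - 1" by simp
    then show False using ii ix_lt[of k] A by linarith
  qed
  ultimately show "i \<noteq> nx (CARD('n) - 1) \<and> k = nx (Suc (ix i))" by blast
qed

lemma shift_sum:
  "shift y (k::'n::finite) = (\<Sum>i\<in>UNIV. y i * (if i \<noteq> (nx (CARD('n) - 1) :: 'n::finite) \<and> k = nx (Suc (ix i)) then 1 else 0))"
  unfolding cond_iff shift_def by (simp add: if_distrib cong: if_cong)


lemma classify:
  fixes S :: "('n::finite) sconst"
  assumes nil: "is_nilpotent S" and ml: "is_mono_leibniz S" and dA: "det (matA S a) \<noteq> 0"
  shows "S \<in> orbit S0"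
proof -
  let ?N = "CARD('n)"
  obtain B where AB: "matA S a ** B = mat 1" and BA: "B ** matA S a = mat 1"
    using dA invertible_det_nz[of "matA S a"] unfolding invertible_def by blast
  define b where "b m = rpow S a m" for m
  define g :: "'n \<Rightarrow> 'n \<Rightarrow> complex" where "g k i = b (ix i) k" for k i
  define h :: "'n \<Rightarrow> 'n \<Rightarrow> complex" where "h i k = B $ k $ i" for i k
  have AB': "(\<Sum>j\<in>UNIV. b (ix i) j * B$j$l) = (if i = l then 1 else 0)" for i l
  proof -
    have "(matA S a ** B) $ i $ l = mat 1 $ i $ l" using AB by simp
    then show ?thesis by (simp add: matrix_matrix_mult_def mat_def matA_def b_def)
  qed
  have BA': "(\<Sum>j\<in>UNIV. B$l$j * b (ix j) i) = (if l = i then 1 else 0)" for l i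
  proof -
    have "(B ** matA S a) $ l $ i = mat 1 $ l $ i" using BA by simp
    then show ?thesis by (simp add: matrix_matrix_mult_def mat_def matA_def b_def)
  qed
  have gh: "lin_apply g (lin_apply h x) = x" for x
  proof
    fix i
    have "lin_apply g (lin_apply h x) i = (\<Sum>j\<in>UNIV. \<Sum>l\<in>UNIV. x l * (B$l$j * b (ix j) i))"
      unfolding lin_apply_def g_def h_def by (simp add: sum_distrib_left mult_ac)
    also have "\<dots> = (\<Sum>l\<in>UNIV. \<Sum>j\<in>UNIV. x l * (B$l$j * b (ix j) i))" by (rule sum.swap)
    also have "\<dots> = (\<Sum>l\<in>UNIV. x l * (if l = i then 1 else 0))" by (simp add: sum_distrib_left[symmetric] BA')
    also have "\<dots> = x i" by (simp add: if_distrib cong: if_cong)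
    finally show "lin_apply g (lin_apply h x) i = x i" .
  qed
  have hg: "lin_apply h (lin_apply g x) = x" for x
  proof
    fix i
    have "lin_apply h (lin_apply g x) i = (\<Sum>j\<in>UNIV. \<Sum>l\<in>UNIV. x l * (b (ix l) j * B$j$i))"
      unfolding lin_apply_def g_def h_def by (simp add: sum_distrib_left mult_ac)
    also have "\<dots> = (\<Sum>l\<in>UNIV. \<Sum>j\<in>UNIV. x l * (b (ix l) j * B$j$i))" by (rule sum.swap)
    also have "\<dots> = (\<Sum>l\<in>UNIV. x l * (if l = i then 1 else 0))" by (simp add: sum_distrib_left[symmetric] AB')
    also have "\<dots> = x i" by (simp add: if_distrib cong: if_cong)
    finally show "lin_apply h (lin_apply g x) i = x i" .
  qed
  have ip: "inv_pair g h" unfolding inv_pair_def using gh hg by blast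
  have g_exp: "lin_apply g y = (\<lambda>k. \<Sum>i\<in>UNIV. y i * b (ix i) k)" for y
    unfolding lin_apply_def g_def by (simp add: mult.commute)
  have g_basis: "lin_apply g (basis_vec i) = b (ix i)" for i
    unfolding lin_basis g_def by simp
  have h_b: "lin_apply h (b m) = basis_vec (nx m)" if "m < ?N" for m
  proof -
    have "b m = lin_apply g (basis_vec (nx m))" using that g_basis by simp
    then show ?thesis by (simp add: hg)
  qed
  have x_exp: "x = (\<lambda>k. \<Sum>i\<in>UNIV. lin_apply h x i * b (ix i) k)" for x
    using gh[of x] g_exp[of "lin_apply h x"] by simp
  have L: "leibniz_on S (gen_subalgebra S a)" using ml unfolding is_mono_leibniz_def by blast
  have Z: "prod_of S x (b q) = (\<lambda>k. 0)" if q1: "q \<ge> 1" for x q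
  proof -
    obtain q' where q: "q = Suc q'" using q1 by (cases q) auto
    have "prod_of S x (b q) = prod_of S (\<lambda>k. \<Sum>i\<in>UNIV. lin_apply h x i * b (ix i) k) (b q)"
      using x_exp[of x] by simp
    also have "\<dots> = (\<lambda>k. \<Sum>i\<in>UNIV. lin_apply h x i * prod_of S (b (ix i)) (b q) k)"
      by (rule prod_lin1) simp
    also have "\<dots> = (\<lambda>k. 0)" unfolding b_def q using zero_prods[OF L] by simp
    finally show ?thesis .
  qed
  define R' where "R' y = lin_apply h (prod_of S (lin_apply g y) a)" for y
  define c where "c = lin_apply h (b ?N)"
  define last where "last = (nx (?N - 1) :: 'n)"
  have R'_formula: "R' y = (\<lambda>j. shift y j + y last * c j)" for y
  proof -
    have P: "prod_of S (lin_apply g y) a = (\<lambda>k. \<Sum>i\<in>UNIV. y i * b (Suc (ix i)) k)"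
      unfolding g_exp by (subst prod_lin1) (simp_all add: b_def)
    have "R' y = (\<lambda>k. \<Sum>i\<in>UNIV. y i * lin_apply h (b (Suc (ix i))) k)"
      unfolding R'_def P by (rule lin_lin) simp
    moreover have "lin_apply h (b (Suc (ix i))) k = (if i = last then c k else basis_vec (nx (Suc (ix i))) k)" for i k
    proof (cases "i = last")
      case True
      then have "Suc (ix i) = ?N" unfolding last_def using ix_nx[of "?N - 1", where 'n='n] by simp
      then show ?thesis using True c_def by simp
    next
      case False
      then have "ix i \<noteq> ?N - 1" unfolding last_def by (metis nx_ix)
      then have "Suc (ix i) < ?N" using ix_lt[of i] by linarith
      then show ?thesis using False h_b by simp
    qed
    moreover have "(\<Sum>i\<in>UNIV. y i * (if i = last then c k else basis_vec (nx (Suc (ix i))) k)) =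
       (\<Sum>i\<in>UNIV. (if i = last then y i * c k else 0) +
         y i * (if i \<noteq> last \<and> k = nx (Suc (ix i)) then 1 else 0))" for k
      by (rule sum.cong) (auto simp: basis_vec_def)
    ultimately have "R' y = (\<lambda>k. \<Sum>i\<in>UNIV. (if i = last then y i * c k else 0) +
         y i * (if i \<noteq> last \<and> k = nx (Suc (ix i)) then 1 else 0))"
      by simp
    then show ?thesis
      by (simp add: sum.distrib shift_sum last_def add.commute)
  qed
  have c0: "c = (\<lambda>k. 0)"
  proof (rule ccontr)
    assume cn: "c \<noteq> (\<lambda>k. 0)"
    then obtain i0 where "c i0 \<noteq> 0" by auto
    then have ex: "\<exists>k. k < ?N \<and> c (nx k) \<noteq> 0" by (intro exI[of _ "ix i0"]) simp
    define k0 where "k0 = (LEAST k. k < ?N \<and> c (nx k) \<noteq> 0)"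
    have k0: "k0 < ?N" "c (nx k0) \<noteq> 0" using LeastI_ex[OF ex] unfolding k0_def by auto
    have below: "c (nx k) = 0" if "k < k0" for k
      using not_less_Least[of k "\<lambda>k. k < ?N \<and> c (nx k) \<noteq> 0"] that k0(1) unfolding k0_def by auto
    define W where "W y \<longleftrightarrow> (\<forall>i. ix i < k0 \<longrightarrow> y i = 0)" for y :: "'n \<Rightarrow> complex"
    have ixlast: "ix last = ?N - 1" unfolding last_def by (rule ix_nx) simp
    have step: "\<exists>z. W z \<and> R' z = y" if Wy: "W y" for y
    proof -
      define \<alpha> where "\<alpha> = y (nx k0) / c (nx k0)"
      define z where "z i = (if i = last then \<alpha> else y (nx (Suc (ix i))) - \<alpha> * c (nx (Suc (ix i))))" for i
      have "W z"
        unfolding W_def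
      proof (intro allI impI)
        fix i :: 'n assume lt: "ix i < k0"
        then have nl: "i \<noteq> last" using ixlast k0(1) by auto
        have s: "Suc (ix i) < ?N" using lt k0(1) by linarith
        then have e: "ix (nx (Suc (ix i)) :: 'n) = Suc (ix i)" by (rule ix_nx)
        show "z i = 0"
        proof (cases "Suc (ix i) < k0")
          case True
          then have "y (nx (Suc (ix i))) = 0" using Wy e unfolding W_def by simp
          moreover have "c (nx (Suc (ix i))) = 0" using below True by simp
          ultimately show ?thesis using nl unfolding z_def by simp
        next
          case False
          then have "Suc (ix i) = k0" using lt by linarith
          then show ?thesis using nl k0(2) unfolding z_def \<alpha>_def by simp
        qed
      qed
      moreover have "R' z = y"
      proof
        fix j
        have "R' z j = shift z j + z last * c j" by (simp add: R'_formula)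
        also have "\<dots> = shift z j + \<alpha> * c j" unfolding z_def by simp
        also have "\<dots> = y j"
        proof (cases "ix j = 0")
          case True
          then have jn: "j = nx 0" by (simp add: ix_zero_iff)
          have "shift z j = 0" using True unfolding shift_def by simp
          moreover have "\<alpha> * c j = y j"
          proof (cases "k0 = 0")
            case True then show ?thesis using jn k0(2) unfolding \<alpha>_def by simp
          next
            case False
            then have "c j = 0" "y j = 0" using below[of 0] Wy \<open>ix j = 0\<close> jn unfolding W_def by auto
            then show ?thesis by simp
          qed
          ultimately show ?thesis by simp
        next
          case False
          have lt: "ix j - 1 < ?N" using ix_lt[of j] by linarith
          then have e: "ix (nx (ix j - 1) :: 'n) = ix j - 1" by (rule ix_nx)
          have nl: "nx (ix j - 1) \<noteq> last"
          proof
            assume "nx (ix j - 1) = last"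
            then have "ix j - 1 = ?N - 1" using e ixlast by simp
            then show False using False ix_lt[of j] by linarith
          qed
          have sj: "nx (Suc (ix j - 1)) = j" using False by (simp add: Suc_pred')
          have "shift z j = y j - \<alpha> * c j" using False nl e sj unfolding shift_def z_def by simp
          then show ?thesis by simp
        qed
        finally show "R' z j = y j" .
      qed
      ultimately show ?thesis by blast
    qed
    have iter: "\<exists>z. W z \<and> (R' ^^ K) z = y" if "W y" for K y
      using that
    proof (induction K arbitrary: y)
      case 0 then show ?case by auto
    next
      case (Suc K)
      obtain z1 where z1: "W z1" "(R' ^^ K) z1 = y" using Suc.IH[OF Suc.prems] by blast
      obtain z where z: "W z" "R' z = z1" using step[OF z1(1)] by blast
      have "(R' ^^ Suc K) z = (R' ^^ K) (R' z)" by (simp only: funpow_Suc_right o_apply)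
      then have "(R' ^^ Suc K) z = y" using z z1 by simp
      then show ?case using z(1) by blast
    qed
    have Riter: "(R' ^^ K) z = lin_apply h (rit S a (lin_apply g z) K)" for K z
      by (induction K) (simp_all add: R'_def gh hg)
    obtain K where K: "\<forall>x. rit S a x K = (\<lambda>k. 0)" using nilp_rit[OF nil] by blast
    have "W c" unfolding W_def using below by (metis nx_ix)
    then obtain z where "(R' ^^ K) z = c" using iter by blast
    then have "c = (\<lambda>k. 0)" using Riter K by simp
    then show False using cn by simp
  qed
  have Rg: "prod_of S (lin_apply g y) a = lin_apply g (shift y)" for y
  proof -
    have "R' y = shift y" using R'_formula[of y] c0 by simp
    then have "lin_apply g (R' y) = lin_apply g (shift y)" by simp
    then show ?thesis unfolding R'_def gh .
  qed
  have "S = gl_act g h S0"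
  proof (rule ext, clarify)
    fix i j k
    define u where "u = lin_apply h (basis_vec j)"
    have "gl_act g h S0 (i, j, k) = lin_apply g (\<lambda>k. u (nx 0) * shift (lin_apply h (basis_vec i)) k) k"
      unfolding gl_act_def u_def by (simp add: S0_prod)
    also have "\<dots> = u (nx 0) * prod_of S (basis_vec i) a k"
      by (simp add: lin_scale Rg[symmetric] gh)
    finally have r: "gl_act g h S0 (i, j, k) = u (nx 0) * prod_of S (basis_vec i) a k" .
    have "S (i, j, k) = prod_of S (basis_vec i) (basis_vec j) k" by (simp add: prod_basis)
    also have "\<dots> = prod_of S (basis_vec i) (\<lambda>k. \<Sum>l\<in>UNIV. u l * b (ix l) k) k"
      using x_exp[of "basis_vec j"] unfolding u_def by simp
    also have "\<dots> = (\<Sum>l\<in>UNIV. u l * prod_of S (basis_vec i) (b (ix l)) k)"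
      by (subst prod_lin2) simp_all
    also have "\<dots> = (\<Sum>l\<in>UNIV. if l = nx 0 then u l * prod_of S (basis_vec i) a k else 0)"
    proof (rule sum.cong[OF refl])
      fix l :: 'n
      show "u l * prod_of S (basis_vec i) (b (ix l)) k = (if l = nx 0 then u l * prod_of S (basis_vec i) a k else 0)"
      proof (cases "l = nx 0")
        case True
        then have "ix l = 0" by (simp add: ix_zero_iff)
        then show ?thesis using True by (simp add: b_def)
      next
        case False
        then have "ix l \<ge> 1" using ix_zero_iff[of l] by simp
        then show ?thesis using False Z by simp
      qed
    qed
    also have "\<dots> = u (nx 0) * prod_of S (basis_vec i) a k" by simp
    finally show "S (i, j, k) = gl_act g h S0 (i, j, k)" using r by simp
  qed
  then show ?thesis unfolding orbit_def using ip by blast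
qed


theorem mainTheorem8:
  shows "\<exists>S::('n::finite) sconst. S \<in> nil_mono_leibniz_variety \<and> rigid_in nil_mono_leibniz_variety S"
proof (intro exI[of _ S0] conjI)
  show "(S0::'n sconst) \<in> nil_mono_leibniz_variety"
    unfolding nil_mono_leibniz_variety_def using S0_nilp leibniz_mono[OF S0_leibniz] by simp
  show "rigid_in nil_mono_leibniz_variety (S0::'n sconst)"
    unfolding rigid_in_def
  proof (intro exI[of _ Uopen] conjI)
    show "zariski_open (Uopen :: 'n sconst set)" by (rule Uopen_open)
    show "orbit (S0::'n sconst) = nil_mono_leibniz_variety \<inter> Uopen"
    proof
      show "orbit (S0::'n sconst) \<subseteq> nil_mono_leibniz_variety \<inter> Uopen" using orbit_sub by blast
      show "nil_mono_leibniz_variety \<inter> Uopen \<subseteq> orbit (S0::'n sconst)"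
        unfolding nil_mono_leibniz_variety_def Uopen_def using classify by blast
    qed
  qed
qed

end
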